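(* Let $p$ be a prime and let $G$ be a finite group of order divisible by $p$. Let $P$ be a Sylow $p$-subgroup of $G$ and let $a$ be a non-negative integer such that $a \le \log_p(\exp(\mathbf{Z}(P)))$. Then $k_G(p^a) \ge p^{a-1}$.
   Context: For a finite group $G$, a prime $p$ and a non-negative integer $a$, $k_G(p^a)$ denotes the number of conjugacy classes of $G$ consisting of elements $g$ with $|g|_p = p^a$, where $|g|_p$ is the $p$-part of the order of $g$. $\mathbf{Z}(P)$ is the center of $P$ and $\exp$ denotes the exponent of a group. *)

theory Defs
  imports "HOL-Algebra.Algebra" "HOL-Computational_Algebra.Primes" Complex_Main
begin

definition is_sylow :: "('a, 'b) monoid_scheme \<Rightarrow> nat \<Rightarrow> 'a set \<Rightarrow> bool" where
  "is_sylow G p P \<longleftrightarrow> subgroup P G \<and> card P = p ^ multiplicity p (order G)"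

definition subgroup_center :: "('a, 'b) monoid_scheme \<Rightarrow> 'a set \<Rightarrow> 'a set" where
  "subgroup_center G P = {z \<in> P. \<forall>g \<in> P. z \<otimes>\<^bsub>G\<^esub> g = g \<otimes>\<^bsub>G\<^esub> z}"

definition set_exponent :: "('a, 'b) monoid_scheme \<Rightarrow> 'a set \<Rightarrow> nat" where
  "set_exponent G H = Lcm (group.ord G ` H)"

definition p_part :: "nat \<Rightarrow> nat \<Rightarrow> nat" where
  "p_part p n = p ^ multiplicity p n"

definition conj_class :: "('a, 'b) monoid_scheme \<Rightarrow> 'a \<Rightarrow> 'a set" where
  "conj_class G g = {inv\<^bsub>G\<^esub> h \<otimes>\<^bsub>G\<^esub> g \<otimes>\<^bsub>G\<^esub> h | h. h \<in> carrier G}"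

definition kG :: "('a, 'b) monoid_scheme \<Rightarrow> nat \<Rightarrow> nat \<Rightarrow> nat" where
  "kG G p a = card {conj_class G g | g. g \<in> carrier G \<and> p_part p (group.ord G g) = p ^ a}"

end

theory Submission
  imports Defs "HOL-Number_Theory.Number_Theory"
begin

lemma card_fibers:
  assumes "finite A"
  shows "card A = (\<Sum>y\<in>f ` A. card {a\<in>A. f a = y})"
proof -
  have "A = (\<Union>y\<in>f ` A. {a\<in>A. f a = y})" by auto
  then have "card A = card (\<Union>y\<in>f ` A. {a\<in>A. f a = y})" by simp
  also have "\<dots> = (\<Sum>y\<in>f ` A. card {a\<in>A. f a = y})"
    using assms by (intro card_UN_disjoint) auto
  finally show ?thesis .
qed

context group begin

lemma cancel_l1 [simp]: "h \<in> carrier G \<Longrightarrow> y \<in> carrier G \<Longrightarrow> h \<otimes> (inv h \<otimes> y) = y"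
  by (simp add: m_assoc[symmetric])
lemma cancel_l2 [simp]: "h \<in> carrier G \<Longrightarrow> y \<in> carrier G \<Longrightarrow> inv h \<otimes> (h \<otimes> y) = y"
  by (simp add: m_assoc[symmetric])

lemma conj_pow:
  assumes "h \<in> carrier G" "y \<in> carrier G"
  shows "inv h \<otimes> (y [^] (m::nat)) \<otimes> h = (inv h \<otimes> y \<otimes> h) [^] m"
proof (induction m)
  case 0 then show ?case using assms by simp
next
  case (Suc m)
  have "(inv h \<otimes> y \<otimes> h) [^] Suc m = (inv h \<otimes> (y [^] m) \<otimes> h) \<otimes> (inv h \<otimes> y \<otimes> h)"
    using Suc by simp
  also have "\<dots> = inv h \<otimes> (y [^] m \<otimes> (h \<otimes> inv h) \<otimes> y) \<otimes> h"
    using assms by (simp add: m_assoc)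
  also have "\<dots> = inv h \<otimes> (y [^] Suc m) \<otimes> h"
    using assms by simp
  finally show ?case by simp
qed

lemma conj_eq_one_iff:
  assumes "h \<in> carrier G" "y \<in> carrier G"
  shows "inv h \<otimes> y \<otimes> h = \<one> \<longleftrightarrow> y = \<one>"
proof
  assume "inv h \<otimes> y \<otimes> h = \<one>"
  then have "h \<otimes> (inv h \<otimes> y \<otimes> h) \<otimes> inv h = h \<otimes> inv h" using assms by simp
  then show "y = \<one>" using assms by (simp add: m_assoc)
qed (use assms in simp)

lemma ord_conj:
  assumes "h \<in> carrier G" "y \<in> carrier G"
  shows "ord (inv h \<otimes> y \<otimes> h) = ord y"
proof -
  have "\<And>n. (inv h \<otimes> y \<otimes> h) [^] (n::nat) = \<one> \<longleftrightarrow> y [^] n = \<one>"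
    using assms by (simp add: conj_pow[symmetric] conj_eq_one_iff)
  then show ?thesis using assms
    by (simp add: ord_unique pow_eq_id)
qed

lemma comm_pow:
  assumes "g \<in> carrier G" "y \<in> carrier G" "g \<otimes> y = y \<otimes> g"
  shows "g \<otimes> (y [^] (m::nat)) = (y [^] m) \<otimes> g"
proof (induction m)
  case (Suc m)
  have "g \<otimes> (y [^] Suc m) = (g \<otimes> y [^] m) \<otimes> y" using assms by (simp add: m_assoc)
  also have "\<dots> = y [^] m \<otimes> (g \<otimes> y)" using Suc assms by (simp add: m_assoc)
  also have "\<dots> = y [^] Suc m \<otimes> g" using assms by (simp add: m_assoc)
  finally show ?case .
qed (use assms in simp)

lemma conj_eq_iff_comm:
  assumes "h \<in> carrier G" "h0 \<in> carrier G" "x \<in> carrier G"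
  shows "inv h \<otimes> x \<otimes> h = inv h0 \<otimes> x \<otimes> h0 \<longleftrightarrow> (h \<otimes> inv h0) \<otimes> x = x \<otimes> (h \<otimes> inv h0)"
proof -
  have "inv h \<otimes> x \<otimes> h = inv h0 \<otimes> x \<otimes> h0 \<longleftrightarrow> h \<otimes> (inv h \<otimes> x \<otimes> h) \<otimes> inv h0 = h \<otimes> (inv h0 \<otimes> x \<otimes> h0) \<otimes> inv h0"
    using assms by (metis inv_closed m_closed l_cancel r_cancel)
  also have "\<dots> \<longleftrightarrow> x \<otimes> (h \<otimes> inv h0) = (h \<otimes> inv h0) \<otimes> x"
    using assms by (simp add: m_assoc inv_solve_left' eq_commute)
  finally show ?thesis by auto
qed

lemma conj_conj:
  assumes "a \<in> carrier G" "b \<in> carrier G" "x \<in> carrier G"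
  shows "inv b \<otimes> (inv a \<otimes> x \<otimes> a) \<otimes> b = inv (a \<otimes> b) \<otimes> x \<otimes> (a \<otimes> b)"
  using assms by (simp add: inv_mult_group m_assoc)

lemma conj_inv_conj:
  assumes "a \<in> carrier G" "x \<in> carrier G"
  shows "inv (inv a) \<otimes> (inv a \<otimes> x \<otimes> a) \<otimes> inv a = x"
  using assms by (simp add: m_assoc)

lemma pow_mod_ord:
  assumes "x \<in> carrier G"
  shows "x [^] (m::nat) = x [^] (m mod ord x)"
proof -
  have "x [^] m = x [^] (ord x * (m div ord x) + m mod ord x)" by (metis mult_div_mod_eq)
  also have "\<dots> = x [^] (ord x * (m div ord x)) \<otimes> x [^] (m mod ord x)"
    using assms by (simp add: nat_pow_mult)
  also have "x [^] (ord x * (m div ord x)) = \<one>"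
    using assms by (simp add: nat_pow_pow[symmetric])
  also have "\<one> \<otimes> x [^] (m mod ord x) = x [^] (m mod ord x)" using assms by simp
  finally show ?thesis .
qed

lemma gen_back:
  assumes fin: "finite (carrier G)" and z: "z \<in> carrier G"
    and x: "x \<in> range (\<lambda>k::nat. z [^] k)" and ox: "ord x = ord z"
  shows "\<exists>l::nat. x [^] l = z"
proof -
  obtain k :: nat where k: "x = z [^] k" using x by auto
  have cop: "coprime k (ord z)" using pow_ord_eq_ord_iff[OF fin z] ox k by simp
  have n1: "ord z \<ge> 1" using ord_ge_1[OF fin z] .
  show ?thesis
  proof (cases "ord z = 1")
    case True
    then have "z = \<one>" using ord_eq_1 z by simp
    then show ?thesis by (intro exI[of _ 0]) simp
  next
    case False
    then have n2: "ord z > 1" using n1 by simp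
    obtain l where l: "[k * l = Suc 0] (mod ord z)" using cong_solve_coprime_nat[OF cop] by blast
    then have "(k * l) mod ord z = 1" using n2 by (simp add: cong_def)
    then have "z [^] (k * l) = z [^] (1::nat)" using pow_mod_ord[OF z, of "k*l"] by simp
    then have "x [^] l = z" using k z by (simp add: nat_pow_pow)
    then show ?thesis by blast
  qed
qed

lemma self_in_conj_class:
  assumes "x \<in> carrier G" shows "x \<in> conj_class G x"
  unfolding conj_class_def using assms by (intro CollectI exI[of _ \<one>]) simp

lemma conj_class_subset:
  assumes "x \<in> carrier G" shows "conj_class G x \<subseteq> carrier G"
  unfolding conj_class_def using assms by auto

lemma conj_class_eq:
  assumes x: "x \<in> carrier G" and y: "y \<in> conj_class G x"
  shows "conj_class G y = conj_class G x"
proof -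
  obtain h where h: "h \<in> carrier G" "y = inv h \<otimes> x \<otimes> h" using y unfolding conj_class_def by auto
  show ?thesis
  proof
    show "conj_class G y \<subseteq> conj_class G x"
    proof
      fix w assume "w \<in> conj_class G y"
      then obtain g where g: "g \<in> carrier G" "w = inv g \<otimes> y \<otimes> g" unfolding conj_class_def by auto
      then have "w = inv (h \<otimes> g) \<otimes> x \<otimes> (h \<otimes> g)" using h x conj_conj by simp
      then show "w \<in> conj_class G x" unfolding conj_class_def using g h by blast
    qed
  next
    show "conj_class G x \<subseteq> conj_class G y"
    proof
      fix w assume "w \<in> conj_class G x"
      then obtain k where k: "k \<in> carrier G" "w = inv k \<otimes> x \<otimes> k" unfolding conj_class_def by auto
      have "inv (inv h \<otimes> k) \<otimes> y \<otimes> (inv h \<otimes> k) = inv (h \<otimes> (inv h \<otimes> k)) \<otimes> x \<otimes> (h \<otimes> (inv h \<otimes> k))"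
        using h x k conj_conj by simp
      also have "\<dots> = w" using h k by simp
      finally show "w \<in> conj_class G y" unfolding conj_class_def using h k by (intro CollectI exI[of _ "inv h \<otimes> k"]) auto
    qed
  qed
qed


lemma card_subgroup_dvd:
  assumes H: "subgroup H G" and K: "subgroup K G" and HK: "H \<subseteq> K"
  shows "card H dvd card K"
proof -
  interpret GK: group "G\<lparr>carrier := K\<rparr>" using subgroup_imp_group[OF K] .
  have "card (rcosets\<^bsub>G\<lparr>carrier := K\<rparr>\<^esub> H) * card H = order (G\<lparr>carrier := K\<rparr>)"
    using GK.lagrange[OF subgroup_incl[OF H K HK]] .
  moreover have "order (G\<lparr>carrier := K\<rparr>) = card K" by (simp add: order_def)
  moreover have "card H dvd card (rcosets\<^bsub>G\<lparr>carrier := K\<rparr>\<^esub> H) * card H" by simp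
  ultimately show ?thesis by simp
qed

lemma count_classes:
  assumes fin: "finite (carrier G)" and p: "Factorial_Ring.prime (p::nat)" and z: "z \<in> carrier G"
    and oz: "ord z = p ^ a"
    and P: "subgroup P G" and cardP: "card P = p ^ multiplicity p (order G)"
    and comm: "\<forall>g\<in>P. g \<otimes> z = z \<otimes> g"
  shows "p ^ (a - 1) \<le> card (conj_class G ` {x \<in> range (\<lambda>k::nat. z [^] k). ord x = p ^ a})"
proof -
  define n where "n = p ^ a"
  define Zs where "Zs = range (\<lambda>k::nat. z [^] k)"
  define S where "S = {x \<in> Zs. ord x = n}"
  define C where "C = {g \<in> carrier G. g \<otimes> z = z \<otimes> g}"
  define N where "N = {h \<in> carrier G. inv h \<otimes> z \<otimes> h \<in> Zs}"
  have Zs_carr: "Zs \<subseteq> carrier G" using z unfolding Zs_def by auto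
  have S_carr: "S \<subseteq> carrier G" using Zs_carr unfolding S_def by auto
  have zS: "z \<in> S" unfolding S_def Zs_def n_def using z oz
    by (auto intro: range_eqI[of _ _ "1::nat"])
  have S_back: "\<exists>l::nat. x [^] l = z" if "x \<in> S" for x
    using gen_back[OF fin z, of x] that oz unfolding S_def Zs_def n_def by auto
  have pow_Zs: "y [^] (m::nat) \<in> Zs" if "y \<in> Zs" for y m
    using that z unfolding Zs_def by (auto simp: nat_pow_pow)
  have commx: "g \<otimes> x = x \<otimes> g \<longleftrightarrow> g \<otimes> z = z \<otimes> g" if x: "x \<in> S" and g: "g \<in> carrier G" for x g
  proof -
    obtain k :: nat where k: "x = z [^] k" using x unfolding S_def Zs_def by auto
    obtain l :: nat where l: "x [^] l = z" using S_back[OF x] by blast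
    have xc: "x \<in> carrier G" using x S_carr by auto
    show ?thesis
    proof
      assume "g \<otimes> x = x \<otimes> g"
      then have "g \<otimes> x [^] l = x [^] l \<otimes> g" using comm_pow[OF g xc] by blast
      then show "g \<otimes> z = z \<otimes> g" using l by simp
    next
      assume "g \<otimes> z = z \<otimes> g"
      then have "g \<otimes> z [^] k = z [^] k \<otimes> g" using comm_pow[OF g z] by blast
      then show "g \<otimes> x = x \<otimes> g" using k by simp
    qed
  qed
  have memN: "inv h \<otimes> x \<otimes> h \<in> S \<longleftrightarrow> h \<in> N" if x: "x \<in> S" and h: "h \<in> carrier G" for x h
  proof -
    obtain k :: nat where k: "x = z [^] k" using x unfolding S_def Zs_def by auto
    obtain l :: nat where l: "x [^] l = z" using S_back[OF x] by blast
    have xc: "x \<in> carrier G" using x S_carr by auto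
    show ?thesis
    proof
      assume "inv h \<otimes> x \<otimes> h \<in> S"
      then have "(inv h \<otimes> x \<otimes> h) [^] l \<in> Zs" using pow_Zs unfolding S_def by auto
      then have "inv h \<otimes> z \<otimes> h \<in> Zs" using conj_pow[OF h xc, of l] l by simp
      then show "h \<in> N" using h unfolding N_def by auto
    next
      assume "h \<in> N"
      then have "(inv h \<otimes> z \<otimes> h) [^] k \<in> Zs" using pow_Zs unfolding N_def by auto
      then have "inv h \<otimes> x \<otimes> h \<in> Zs" using conj_pow[OF h z, of k] k by simp
      moreover have "ord (inv h \<otimes> x \<otimes> h) = n" using ord_conj[OF h xc] x unfolding S_def by auto
      ultimately show "inv h \<otimes> x \<otimes> h \<in> S" unfolding S_def by auto
    qed
  qed
  have N_alt: "h \<in> N \<longleftrightarrow> h \<in> carrier G \<and> inv h \<otimes> z \<otimes> h \<in> S" for h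
    using memN[OF zS] unfolding N_def by auto
  have subC: "subgroup C G"
  proof (rule subgroupI)
    show "C \<subseteq> carrier G" unfolding C_def by auto
    have "\<one> \<in> C" unfolding C_def using z by simp
    then show "C \<noteq> {}" by blast
  next
    fix a assume a: "a \<in> C"
    then have ac: "a \<in> carrier G" and az: "a \<otimes> z = z \<otimes> a" unfolding C_def by auto
    have "inv a \<otimes> (a \<otimes> z) \<otimes> inv a = inv a \<otimes> (z \<otimes> a) \<otimes> inv a" using az by simp
    then have "z \<otimes> inv a = inv a \<otimes> z" using ac z by (simp add: m_assoc)
    then show "inv a \<in> C" unfolding C_def using ac by auto
  next
    fix a b assume "a \<in> C" "b \<in> C"
    then have ac: "a \<in> carrier G" and az: "a \<otimes> z = z \<otimes> a" and bc: "b \<in> carrier G" and bz: "b \<otimes> z = z \<otimes> b"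
      unfolding C_def by auto
    have "a \<otimes> b \<otimes> z = a \<otimes> (b \<otimes> z)" using ac bc z by (simp add: m_assoc)
    also have "\<dots> = (a \<otimes> z) \<otimes> b" using ac bc z bz by (simp add: m_assoc)
    also have "\<dots> = z \<otimes> (a \<otimes> b)" using ac bc z az by (simp add: m_assoc)
    finally show "a \<otimes> b \<in> C" unfolding C_def using ac bc by auto
  qed
  have subN: "subgroup N G"
  proof (rule subgroupI)
    show "N \<subseteq> carrier G" unfolding N_def by auto
    have "\<one> \<in> N" using N_alt zS z by simp
    then show "N \<noteq> {}" by blast
  next
    fix a assume a: "a \<in> N"
    then have ac: "a \<in> carrier G" and y: "inv a \<otimes> z \<otimes> a \<in> S" using N_alt by auto
    have "inv (inv a) \<otimes> (inv a \<otimes> z \<otimes> a) \<otimes> inv a \<in> S" using conj_inv_conj[OF ac z] zS by simp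
    moreover have "inv a \<in> carrier G" using ac by simp
    ultimately show "inv a \<in> N" using memN[OF y] by blast
  next
    fix a b assume "a \<in> N" "b \<in> N"
    then have ac: "a \<in> carrier G" and y: "inv a \<otimes> z \<otimes> a \<in> S" and bc: "b \<in> carrier G" and "inv b \<otimes> (inv a \<otimes> z \<otimes> a) \<otimes> b \<in> S"
      using N_alt memN by auto
    then have "inv (a \<otimes> b) \<otimes> z \<otimes> (a \<otimes> b) \<in> S" using conj_conj[OF ac bc z] by simp
    then show "a \<otimes> b \<in> N" using N_alt ac bc by simp
  qed
  have PC: "P \<subseteq> C" using comm subgroup.subset[OF P] unfolding C_def by auto
  have finC: "finite C" and finN: "finite N" and finS: "finite S"
    using fin subgroup.subset[OF subC] subgroup.subset[OF subN] S_carr finite_subset by blast+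
  have Cpos: "card C > 0" using finC subgroup.one_closed[OF subC] card_gt_0_iff by blast
  have fiber: "card N = card (conj_class G x \<inter> S) * card C" if x: "x \<in> S" for x
  proof -
    define f where "f = (\<lambda>h. inv h \<otimes> x \<otimes> h)"
    have xc: "x \<in> carrier G" using x S_carr by auto
    have img: "conj_class G x \<inter> S = f ` N"
      unfolding conj_class_def f_def using memN[OF x] N_def by auto
    have fib: "{h \<in> N. f h = f h0} = C #> h0" if h0: "h0 \<in> N" for h0
    proof
      have h0c: "h0 \<in> carrier G" using h0 N_def by auto
      show "{h \<in> N. f h = f h0} \<subseteq> C #> h0"
      proof
        fix h assume "h \<in> {h \<in> N. f h = f h0}"
        then have hc: "h \<in> carrier G" and e: "f h = f h0" using N_def by auto
        have "(h \<otimes> inv h0) \<otimes> x = x \<otimes> (h \<otimes> inv h0)"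
          using e conj_eq_iff_comm[OF hc h0c xc] unfolding f_def by simp
        then have "h \<otimes> inv h0 \<in> C" using commx[OF x, of "h \<otimes> inv h0"] hc h0c unfolding C_def by auto
        moreover have "h = (h \<otimes> inv h0) \<otimes> h0" using hc h0c by (simp add: m_assoc)
        ultimately show "h \<in> C #> h0" unfolding r_coset_def by blast
      qed
    next
      have h0c: "h0 \<in> carrier G" using h0 N_def by auto
      show "C #> h0 \<subseteq> {h \<in> N. f h = f h0}"
      proof
        fix h assume "h \<in> C #> h0"
        then obtain c where c: "c \<in> C" and hc_eq: "h = c \<otimes> h0" unfolding r_coset_def by blast
        have cc: "c \<in> carrier G" using c C_def by auto
        have hc: "h \<in> carrier G" using hc_eq cc h0c by simp
        have "h \<otimes> inv h0 = c" using hc_eq cc h0c by (simp add: m_assoc)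
        moreover have "c \<otimes> x = x \<otimes> c" using commx[OF x cc] c C_def by auto
        ultimately have e: "f h = f h0" using conj_eq_iff_comm[OF hc h0c xc] unfolding f_def by simp
        have "f h0 \<in> S" using memN[OF x h0c] h0 unfolding f_def by simp
        then have "h \<in> N" using memN[OF x hc] e unfolding f_def by simp
        then show "h \<in> {h \<in> N. f h = f h0}" using e by simp
      qed
    qed
    have "card N = (\<Sum>y\<in>f ` N. card {h\<in>N. f h = y})" using card_fibers[OF finN] .
    also have "\<dots> = (\<Sum>y\<in>f ` N. card C)"
    proof (rule sum.cong[OF refl])
      fix y assume "y \<in> f ` N"
      then obtain h0 where h0: "h0 \<in> N" "y = f h0" by auto
      have h0c: "h0 \<in> carrier G" using h0 N_def by auto
      have "card {h\<in>N. f h = y} = card (C #> h0)" using fib[OF h0(1)] h0(2) by simp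
      also have "\<dots> = card C"
        using card_rcosets_equal[OF rcosetsI[OF subgroup.subset[OF subC] h0c] subgroup.subset[OF subC]] by simp
      finally show "card {h\<in>N. f h = y} = card C" .
    qed
    also have "\<dots> = card (f ` N) * card C" by simp
    finally show ?thesis using img by simp
  qed
  define K where "K = card N div card C"
  have fiberK: "card (conj_class G x \<inter> S) = K" if "x \<in> S" for x
    using fiber[OF that] Cpos unfolding K_def by simp
  have KC: "K * card C = card N" using fiber[OF zS] fiberK[OF zS] by simp
  have cardS: "card S = card (conj_class G ` S) * K"
  proof -
    have "card S = (\<Sum>cl\<in>conj_class G ` S. card {x\<in>S. conj_class G x = cl})" using card_fibers[OF finS] .
    also have "\<dots> = (\<Sum>cl\<in>conj_class G ` S. K)"
    proof (rule sum.cong[OF refl])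
      fix cl assume "cl \<in> conj_class G ` S"
      then obtain x0 where x0: "x0 \<in> S" "cl = conj_class G x0" by auto
      have x0c: "x0 \<in> carrier G" using x0 S_carr by auto
      have "{x\<in>S. conj_class G x = cl} = conj_class G x0 \<inter> S"
      proof
        show "{x\<in>S. conj_class G x = cl} \<subseteq> conj_class G x0 \<inter> S"
          using x0 self_in_conj_class S_carr by blast
        show "conj_class G x0 \<inter> S \<subseteq> {x\<in>S. conj_class G x = cl}"
          using x0 conj_class_eq[OF x0c] by blast
      qed
      then show "card {x\<in>S. conj_class G x = cl} = K" using fiberK[OF x0(1)] by simp
    qed
    also have "\<dots> = card (conj_class G ` S) * K" by simp
    finally show ?thesis .
  qed
  define v where "v = multiplicity p (order G)"
  have ordpos: "order G > 0" using fin order_gt_0_iff_finite by blast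
  have notu: "\<not> is_unit p" using p by auto
  have Ndvd: "card N dvd order G" using lagrange[OF subN] by (metis dvd_triv_right)
  have Pdvd: "card P dvd card C"
  proof -
    interpret GC: group "G\<lparr>carrier := C\<rparr>" using subgroup_imp_group[OF subC] .
    have "card (rcosets\<^bsub>G\<lparr>carrier := C\<rparr>\<^esub> P) * card P = order (G\<lparr>carrier := C\<rparr>)"
      using GC.lagrange[OF subgroup_incl[OF P subC PC]] .
    moreover have "order (G\<lparr>carrier := C\<rparr>) = card C" by (simp add: order_def)
    moreover have "card P dvd card (rcosets\<^bsub>G\<lparr>carrier := C\<rparr>\<^esub> P) * card P" by simp
    ultimately show ?thesis by simp
  qed
  have copK: "coprime K p"
  proof (rule ccontr)
    assume "\<not> coprime K p"
    then have "p dvd K" using p prime_imp_coprime coprime_commute by blast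
    moreover have "p ^ v dvd card C" using Pdvd cardP v_def by simp
    ultimately have "p * p ^ v dvd K * card C" by (rule mult_dvd_mono)
    then have "p ^ Suc v dvd card N" using KC by simp
    then have "p ^ Suc v dvd order G" using Ndvd by (rule dvd_trans)
    then have "Suc v \<le> v" using power_dvd_iff_le_multiplicity[of "order G" p "Suc v"] ordpos notu v_def by simp
    then show False by simp
  qed
  have totS: "card S = totient n"
  proof -
    have n0: "n > 0" using p n_def by (simp add: prime_gt_0_nat)
    have "S = (\<lambda>k. z [^] k) ` totatives n"
    proof
      show "(\<lambda>k. z [^] k) ` totatives n \<subseteq> S"
      proof
        fix x assume "x \<in> (\<lambda>k. z [^] k) ` totatives n"
        then obtain k where k: "k \<in> totatives n" "x = z [^] k" by auto
        have "coprime k (ord z)" using k oz n_def totatives_def by auto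
        then have "ord x = n" using pow_ord_eq_ord_iff[OF fin z, of k] k oz n_def by simp
        then show "x \<in> S" unfolding S_def Zs_def using k by auto
      qed
    next
      show "S \<subseteq> (\<lambda>k. z [^] k) ` totatives n"
      proof
        fix x assume x: "x \<in> S"
        then obtain k :: nat where k: "x = z [^] k" unfolding S_def Zs_def by auto
        have cop: "coprime k n" using pow_ord_eq_ord_iff[OF fin z, of k] k x oz n_def S_def by simp
        show "x \<in> (\<lambda>k. z [^] k) ` totatives n"
        proof (cases "k mod n = 0")
          case True
          then have "n dvd k" by auto
          have "n = 1" by (rule coprime_common_divisor_nat[OF cop]) (simp_all add: \<open>n dvd k\<close>)
          then have "z = \<one>" using ord_eq_1[OF z] oz n_def by simp
          then have "x = z [^] (1::nat)" using k by simp
          moreover have "(1::nat) \<in> totatives n" using \<open>n = 1\<close> by (simp add: totatives_def)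
          ultimately show ?thesis by blast
        next
          case False
          have "x = z [^] (k mod n)" using k pow_mod_ord[OF z, of k] oz n_def by simp
          moreover have "k mod n \<in> totatives n" using False cop n0 by (simp add: totatives_def)
          ultimately show ?thesis by blast
        qed
      qed
    qed
    moreover have "inj_on (\<lambda>k. z [^] k) (totatives n)"
    proof (rule inj_on_subset[OF ord_inj'[OF z]])
      show "totatives n \<subseteq> {1..ord z}" using oz n_def by (auto simp: totatives_def)
    qed
    ultimately show ?thesis unfolding totient_def by (simp add: card_image)
  qed
  have dvdS: "p ^ (a - 1) dvd card S"
  proof (cases "a = 0")
    case False
    then show ?thesis using totS n_def totient_prime_power[OF p] by simp
  qed simp
  have "coprime (p ^ (a - 1)) K" using copK by (simp add: coprime_commute)
  moreover have "p ^ (a - 1) dvd card (conj_class G ` S) * K" using dvdS cardS by simp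
  ultimately have d: "p ^ (a - 1) dvd card (conj_class G ` S)"
    using coprime_dvd_mult_left_iff by blast
  have "card (conj_class G ` S) > 0" using finS zS by (auto simp add: card_gt_0_iff)
  then have "p ^ (a - 1) \<le> card (conj_class G ` S)" using d dvd_imp_le by blast
  then show ?thesis unfolding S_def Zs_def n_def .
qed

end



lemma (in group) thm_main:
  fixes p a :: nat and P :: "'a set"
  assumes "Factorial_Ring.prime p"
    and "group G"
    and "finite (carrier G)"
    and "p dvd order G"
    and "is_sylow G p P"
    and "real a \<le> log (real p) (real (set_exponent G (subgroup_center G P)))"
  shows "real (kG G p a) \<ge> real p powr (real a - 1)"
proof -
  note p = assms(1) and fin = assms(3)
  have P: "subgroup P G" and cardP: "card P = p ^ multiplicity p (order G)"
    using assms(5) unfolding is_sylow_def by auto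
  define v where "v = multiplicity p (order G)"
  define Zc where "Zc = subgroup_center G P"
  have ZcP: "Zc \<subseteq> P" unfolding Zc_def subgroup_center_def by auto
  have p1: "p > 1" using p prime_gt_1_nat by blast
  have notu: "\<not> is_unit p" using p by auto
  have ordZ: "\<exists>i\<le>v. ord w = p ^ i" if w: "w \<in> Zc" for w
  proof -
    have wP: "w \<in> P" using w ZcP by auto
    have wc: "w \<in> carrier G" using wP subgroup.subset[OF P] by auto
    have "generate G {w} \<subseteq> P" using generate_subgroup_incl[of "{w}" P] wP P by auto
    then have "card (generate G {w}) dvd card P"
      using card_subgroup_dvd[OF generate_is_subgroup P] wc by auto
    then have "ord w dvd p ^ v" using generate_pow_card[OF wc] cardP v_def by simp
    then show ?thesis using divides_primepow_nat[OF p] by blast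
  qed
  obtain z where z: "z \<in> carrier G" and oz: "ord z = p ^ a" and comm: "\<forall>g\<in>P. g \<otimes> z = z \<otimes> g"
  proof (cases "a = 0")
    case True
    have "\<forall>g\<in>P. g \<otimes> \<one> = \<one> \<otimes> g" using subgroup.subset[OF P] by auto
    then show ?thesis using that[of \<one>] True by simp
  next
    case False
    have "\<exists>w\<in>Zc. \<not> ord w dvd p ^ (a - 1)"
    proof (rule ccontr)
      assume "\<not> ?thesis"
      then have "Lcm (ord ` Zc) dvd p ^ (a - 1)" by (auto intro: Lcm_least)
      moreover have pos: "p ^ (a - 1) > 0" using p1 by simp
      ultimately have L1: "Lcm (ord ` Zc) \<le> p ^ (a - 1)" and L0: "Lcm (ord ` Zc) > 0"
        using dvd_imp_le dvd_pos_nat by blast+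
      have "real p powr real a \<le> real (Lcm (ord ` Zc))"
        using assms(6) le_log_iff[of "real p" "real (Lcm (ord ` Zc))" "real a"] p1 L0
        unfolding Zc_def set_exponent_def by simp
      then have "real p ^ a \<le> real (Lcm (ord ` Zc))" using p1 by (simp add: powr_realpow)
      then have "p ^ a \<le> Lcm (ord ` Zc)" by (metis of_nat_le_iff of_nat_power)
      moreover have "p ^ (a - 1) < p ^ a" using p1 False by simp
      ultimately show False using L1 by simp
    qed
    then obtain w where w: "w \<in> Zc" and nd: "\<not> ord w dvd p ^ (a - 1)" by blast
    obtain i where i: "ord w = p ^ i" using ordZ[OF w] by blast
    have "\<not> i \<le> a - 1" using nd i le_imp_power_dvd by metis
    then have ia: "a \<le> i" by simp
    have wP: "w \<in> P" using w ZcP by auto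
    have wc: "w \<in> carrier G" using wP subgroup.subset[OF P] by auto
    define z where "z = w [^] (p ^ (i - a))"
    have "p ^ (i - a) dvd ord w" using i ia by (simp add: le_imp_power_dvd)
    then have "ord z = p ^ i div p ^ (i - a)" using ord_pow[OF wc] i p1 unfolding z_def by simp
    also have "\<dots> = p ^ a"
    proof -
      have "p ^ i = p ^ (i - a) * p ^ a" using ia by (simp flip: power_add)
      then show ?thesis using p1 by simp
    qed
    finally have oz: "ord z = p ^ a" .
    have "\<forall>g\<in>P. g \<otimes> z = z \<otimes> g"
    proof
      fix g assume g: "g \<in> P"
      have gc: "g \<in> carrier G" using g subgroup.subset[OF P] by auto
      have "w \<otimes> g = g \<otimes> w" using w g unfolding Zc_def subgroup_center_def by auto
      then show "g \<otimes> z = z \<otimes> g" unfolding z_def using comm_pow[OF gc wc] by simp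
    qed
    moreover have "z \<in> carrier G" using wc unfolding z_def by simp
    ultimately show ?thesis using that oz by blast
  qed
  define S where "S = {x \<in> range (\<lambda>k::nat. z [^] k). ord x = p ^ a}"
  have cnt: "p ^ (a - 1) \<le> card (conj_class G ` S)"
    using count_classes[OF fin p z oz P cardP comm] unfolding S_def .
  have sub: "conj_class G ` S \<subseteq> {conj_class G g | g. g \<in> carrier G \<and> p_part p (ord g) = p ^ a}"
  proof
    fix c assume "c \<in> conj_class G ` S"
    then obtain x where x: "x \<in> S" "c = conj_class G x" by auto
    have "x \<in> carrier G" using x z unfolding S_def by auto
    moreover have "p_part p (ord x) = p ^ a"
      using x p1 notu unfolding S_def p_part_def by (simp add: multiplicity_same_power)
    ultimately show "c \<in> {conj_class G g | g. g \<in> carrier G \<and> p_part p (ord g) = p ^ a}" using x by blast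
  qed
  have "finite {conj_class G g | g. g \<in> carrier G \<and> p_part p (ord g) = p ^ a}"
    by (rule finite_subset[of _ "conj_class G ` carrier G"]) (use fin in auto)
  then have "card (conj_class G ` S) \<le> kG G p a"
    unfolding kG_def using card_mono sub by blast
  then have kge: "p ^ (a - 1) \<le> kG G p a" using cnt by simp
  show ?thesis
  proof (cases "a = 0")
    case True
    have "real p powr (real a - 1) \<le> real p powr 0"
      using True p1 by (intro powr_mono) auto
    also have "\<dots> = 1" using p1 by simp
    also have "\<dots> \<le> real (kG G p a)" using kge True by simp
    finally show ?thesis .
  next
    case False
    have "real p powr (real a - 1) = real p powr (real (a - 1))" using False by (simp add: of_nat_diff)
    also have "\<dots> = real p ^ (a - 1)" using p1 by (simp add: powr_realpow)
    also have "\<dots> \<le> real (kG G p a)" using kge by (metis of_nat_le_iff of_nat_power)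
    finally show ?thesis .
  qed
qed


theorem theorem1p1:
  fixes G :: "('a, 'b) monoid_scheme" and p a :: nat and P :: "'a set"
  assumes "Factorial_Ring.prime p"
    and "group G"
    and "finite (carrier G)"
    and "p dvd order G"
    and "is_sylow G p P"
    and "real a \<le> log (real p) (real (set_exponent G (subgroup_center G P)))"
  shows "real (kG G p a) \<ge> real p powr (real a - 1)"
  using group.thm_main[OF assms(2) assms] .

end
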